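(* Let $\boldsymbol{f},\bar{\boldsymbol{f}}\in\mathbb{R}^E$ with $\boldsymbol{u}^-_e<\boldsymbol{f}_e<\boldsymbol{u}^+_e$ for all $e$. If $\|\mathbf{L}(\boldsymbol{f})(\boldsymbol{f}-\bar{\boldsymbol{f}})\|_\infty\le\varepsilon$ for some $\varepsilon\le1/100$, then $\boldsymbol{\ell}(\boldsymbol{f})\approx_{1+3\varepsilon}\boldsymbol{\ell}(\bar{\boldsymbol{f}})$.
   Context: $G=(V,E)$ is a directed graph with $m=|E|$ edges; lower/upper capacities $\boldsymbol{u}^-,\boldsymbol{u}^+\in\mathbb{Z}^E$ are integers bounded in absolute value by $U$. $\alpha=1/(1000\log(mU))$. Lengths $\boldsymbol{\ell}(\boldsymbol{f})_e=(\boldsymbol{u}^+_e-\boldsymbol{f}_e)^{-1-\alpha}+(\boldsymbol{f}_e-\boldsymbol{u}^-_e)^{-1-\alpha}$ and $\mathbf{L}(\boldsymbol{f})=\mathrm{diag}(\boldsymbol{\ell}(\boldsymbol{f}))$. For positive vectors, $\boldsymbol{x}\approx_\beta\boldsymbol{y}$ means $\beta^{-1}\boldsymbol{y}_i\le\boldsymbol{x}_i\le\beta\boldsymbol{y}_i$ for all $i$. *)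

theory Defs
  imports Complex_Main
begin

definition alpha :: "nat \<Rightarrow> int \<Rightarrow> real" where
  "alpha m U = 1 / (1000 * log 2 (real m * real_of_int U))"

definition len :: "real \<Rightarrow> ('e \<Rightarrow> int) \<Rightarrow> ('e \<Rightarrow> int) \<Rightarrow> ('e \<Rightarrow> real) \<Rightarrow> 'e \<Rightarrow> real" where
  "len a lo up f e =
     (real_of_int (up e) - f e) powr (-1 - a) + (f e - real_of_int (lo e)) powr (-1 - a)"

definition approx :: "'e set \<Rightarrow> real \<Rightarrow> ('e \<Rightarrow> real) \<Rightarrow> ('e \<Rightarrow> real) \<Rightarrow> bool" where
  "approx I \<beta> x y \<longleftrightarrow> (\<forall>i\<in>I. y i / \<beta> \<le> x i \<and> x i \<le> \<beta> * y i)"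

definition linf :: "'e set \<Rightarrow> ('e \<Rightarrow> real) \<Rightarrow> real" where
  "linf I v = (if I = {} then 0 else Max ((\<lambda>i. \<bar>v i\<bar>) ` I))"

end

theory Submission
  imports Defs
begin

lemma ratio_bounds:
  fixes r a \<epsilon> :: real
  assumes a0: "0 \<le> a" and a1: "a \<le> 1" and r: "\<bar>r - 1\<bar> \<le> 101/100 * \<epsilon>"
    and e0: "0 \<le> \<epsilon>" and e1: "\<epsilon> \<le> 1/100"
  shows "r powr (-1-a) \<le> 1 + 3*\<epsilon>" and "1 \<le> (1 + 3*\<epsilon>) * r powr (-1-a)"
proof -
  define \<eta> where "\<eta> = 101/100 * \<epsilon>"
  have h0: "0 \<le> \<eta>" "\<eta> \<le> 101/10000" using e0 e1 by (auto simp: \<eta>_def)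
  have rl: "1 - \<eta> \<le> r" "r \<le> 1 + \<eta>" using r unfolding \<eta>_def by linarith+
  have "r powr (-1-a) \<le> (1-\<eta>) powr (-1-a)"
    using powr_mono2'[of "-1-a" "1-\<eta>" r] rl h0 a0 by auto
  also have "\<dots> \<le> (1-\<eta>) powr (-2)"
    using powr_mono'[of "-2" "-1-a" "1-\<eta>"] a1 h0 by auto
  also have "\<dots> = 1 / (1-\<eta>)^2"
  proof -
    have "(1-\<eta>) powr (-2) = inverse ((1-\<eta>) powr 2)" by (rule powr_minus)
    also have "(1-\<eta>) powr 2 = (1-\<eta>)^2" using h0 by (intro powr_numeral) simp
    finally show ?thesis by (simp add: divide_inverse)
  qed
  also have "\<dots> \<le> 1 + 3*\<epsilon>"
  proof -
    have q: "\<epsilon>*\<epsilon> \<le> \<epsilon>/100" using e0 e1 mult_left_mono[of \<epsilon> "1/100" \<epsilon>] by simp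
    have c: "0 \<le> \<epsilon>*\<epsilon>*\<epsilon>" using e0 by simp
    have "(1 + 3*\<epsilon>) * (1-\<eta>)^2 = 1 + 98/100*\<epsilon> - 50399/10000*(\<epsilon>*\<epsilon>) + 30603/10000*(\<epsilon>*\<epsilon>*\<epsilon>)"
      unfolding \<eta>_def power2_eq_square by (simp add: field_simps)
    then have "1 \<le> (1 + 3*\<epsilon>) * (1-\<eta>)^2" using q c e0 by linarith
    moreover have "(1-\<eta>)^2 > 0" using h0 by auto
    ultimately show ?thesis by (simp add: field_simps)
  qed
  finally show "r powr (-1-a) \<le> 1 + 3*\<epsilon>" .
  have "1 / (1+\<eta>)^2 = (1+\<eta>) powr (-2)"
  proof -
    have "(1+\<eta>) powr (-2) = inverse ((1+\<eta>) powr 2)" by (rule powr_minus)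
    also have "(1+\<eta>) powr 2 = (1+\<eta>)^2" using h0 by (intro powr_numeral) simp
    finally show ?thesis by (simp add: divide_inverse)
  qed
  also have "\<dots> \<le> (1+\<eta>) powr (-1-a)"
    using powr_mono[of "-2" "-1-a" "1+\<eta>"] a1 h0 by auto
  also have "\<dots> \<le> r powr (-1-a)"
    using powr_mono2'[of "-1-a" r "1+\<eta>"] rl h0 a0 by auto
  finally have A: "1 / (1+\<eta>)^2 \<le> r powr (-1-a)" .
  have q: "\<epsilon>*\<epsilon> \<le> \<epsilon>/100" using e0 e1 mult_left_mono[of \<epsilon> "1/100" \<epsilon>] by simp
  have "(1+\<eta>)^2 = 1 + 202/100*\<epsilon> + 10201/10000*(\<epsilon>*\<epsilon>)"
    unfolding \<eta>_def power2_eq_square by (simp add: field_simps)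
  then have B: "(1+\<eta>)^2 \<le> 1 + 3*\<epsilon>" using q e0 by linarith
  have "1 \<le> (1 + 3*\<epsilon>) * (1 / (1+\<eta>)^2)"
    using B h0 by (simp add: field_simps)
  also have "\<dots> \<le> (1 + 3*\<epsilon>) * r powr (-1-a)"
    using A e0 by (intro mult_left_mono) auto
  finally show "1 \<le> (1 + 3*\<epsilon>) * r powr (-1-a)" .
qed


lemma term_bound:
  fixes s d a \<epsilon> :: real
  assumes s0: "0 < s" and a0: "0 \<le> a" and a1: "a \<le> 1" and sa: "s powr a \<le> 101/100"
    and d: "\<bar>d\<bar> * s powr (-1-a) \<le> \<epsilon>" and e0: "0 \<le> \<epsilon>" and e1: "\<epsilon> \<le> 1/100"
  shows "(s + d) powr (-1-a) \<le> (1 + 3*\<epsilon>) * s powr (-1-a)"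
    and "s powr (-1-a) \<le> (1 + 3*\<epsilon>) * (s + d) powr (-1-a)"
proof -
  have sp: "s powr (1+a) * s powr (-1-a) = 1"
    using s0 by (simp add: powr_add[symmetric])
  have "\<bar>d\<bar> = \<bar>d\<bar> * s powr (-1-a) * s powr (1+a)" using sp by (simp add: mult.commute)
  also have "\<dots> \<le> \<epsilon> * s powr (1+a)"
    using d by (intro mult_right_mono) auto
  also have "s powr (1+a) = s * s powr a" using s0 by (simp add: powr_add)
  finally have "\<bar>d\<bar> \<le> \<epsilon> * (s * s powr a)" .
  also have "\<dots> \<le> \<epsilon> * (s * (101/100))"
    using sa s0 e0 by (intro mult_left_mono) auto
  finally have dd: "\<bar>d\<bar> \<le> 101/100 * \<epsilon> * s" by simp
  define r where "r = (s + d) / s"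
  have sd: "s + d = s * r" using s0 by (simp add: r_def)
  have "\<bar>r - 1\<bar> = \<bar>d\<bar> / s" using s0 by (simp add: r_def field_simps)
  also have "\<dots> \<le> 101/100 * \<epsilon>" using dd s0 by (simp add: field_simps)
  finally have r: "\<bar>r - 1\<bar> \<le> 101/100 * \<epsilon>" .
  have rp: "0 < r" using r e1 by linarith
  have pm: "(s + d) powr (-1-a) = s powr (-1-a) * r powr (-1-a)"
    unfolding sd using s0 rp by (simp add: powr_mult)
  have spos: "0 \<le> s powr (-1-a)" by simp
  show "(s + d) powr (-1-a) \<le> (1 + 3*\<epsilon>) * s powr (-1-a)"
    unfolding pm using ratio_bounds(1)[OF a0 a1 r e0 e1] spos
    by (metis mult.commute mult_left_mono)
  have "s powr (-1-a) = s powr (-1-a) * 1" by simp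
  also have "\<dots> \<le> s powr (-1-a) * ((1 + 3*\<epsilon>) * r powr (-1-a))"
    using ratio_bounds(2)[OF a0 a1 r e0 e1] spos by (intro mult_left_mono) auto
  finally show "s powr (-1-a) \<le> (1 + 3*\<epsilon>) * (s + d) powr (-1-a)"
    unfolding pm by (simp add: ac_simps)
qed


lemma alpha_props:
  fixes m :: nat and U :: int
  assumes m1: "1 \<le> m" and U1: "1 \<le> U"
  shows "0 \<le> alpha m U" "alpha m U \<le> 1"
    "\<And>s. 0 < s \<Longrightarrow> s \<le> 2 * real_of_int U \<Longrightarrow> s powr alpha m U \<le> 101/100"
proof -
  define x where "x = real m * real_of_int U"
  have mU: "1 \<le> real m" "1 \<le> real_of_int U" using m1 U1 by auto
  have x1: "1 \<le> x" unfolding x_def using mU mult_mono[of 1 "real m" 1 "real_of_int U"] by simp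
  have Ux: "real_of_int U \<le> x" unfolding x_def using mU by (simp add: mult_right_mono[of 1 "real m" "real_of_int U", simplified])
  have "0 \<le> alpha m U \<and> alpha m U \<le> 1 \<and> (\<forall>s. 0 < s \<longrightarrow> s \<le> 2 * real_of_int U \<longrightarrow> s powr alpha m U \<le> 101/100)"
  proof (cases "x = 1")
    case True
    then have "alpha m U = 0" by (simp add: alpha_def x_def[symmetric])
    then show ?thesis by simp
  next
    case False
    have x2: "2 \<le> x"
    proof (cases "m = 1")
      case True
      then have "U \<noteq> 1" using False by (auto simp: x_def)
      then have "2 \<le> U" using U1 by auto
      then show ?thesis using True by (simp add: x_def)
    next
      case False
      then have "2 \<le> real m" using m1 by auto
      then show ?thesis unfolding x_def using mU mult_mono[of 2 "real m" 1 "real_of_int U"] by simp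
    qed
    define L where "L = log 2 x"
    have L1: "1 \<le> L" unfolding L_def using x2 by simp
    have adef: "alpha m U = 1 / (1000 * L)" by (simp add: alpha_def L_def x_def)
    have a0: "0 \<le> alpha m U" "alpha m U \<le> 1" using L1 by (auto simp: adef field_simps)
    have "s powr alpha m U \<le> 101/100" if s0: "0 < s" and s2: "s \<le> 2 * real_of_int U" for s
    proof (cases "s \<le> 1")
      case True
      then show ?thesis using powr_le1[of "alpha m U" s] a0 s0 by simp
    next
      case False
      have "s powr alpha m U \<le> (2 * real_of_int U) powr alpha m U"
        using powr_mono2 a0 s0 s2 by simp
      also have "\<dots> = exp (alpha m U * ln (2 * real_of_int U))"
        using mU by (simp add: powr_def)
      also have "\<dots> \<le> exp (2/1000)"
      proof -
        have ln2: "ln 2 \<le> ln x" using x2 by simp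
        have lnx: "0 < ln x" using x2 by simp
        have "ln (2 * real_of_int U) = ln 2 + ln (real_of_int U)" using mU by (simp add: ln_mult)
        also have "\<dots> \<le> 2 * ln x"
        proof -
          have "ln (real_of_int U) \<le> ln x" using Ux mU by simp
          then show ?thesis using ln2 by linarith
        qed
        finally have l: "ln (2 * real_of_int U) \<le> 2 * ln x" .
        have Lx: "L = ln x / ln 2" by (simp add: L_def log_def)
        have "alpha m U * ln (2 * real_of_int U) \<le> alpha m U * (2 * ln x)"
          using l a0 by (intro mult_left_mono) auto
        also have "\<dots> = 2 * ln 2 / 1000" using lnx by (simp add: adef Lx field_simps)
        also have "\<dots> \<le> 2/1000" using ln_2_less_1 by simp
        finally show ?thesis by simp
      qed
      also have "\<dots> \<le> 1 + 2/1000 + (2/1000)^2" by (rule exp_bound) auto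
      also have "\<dots> \<le> 101/100" by (simp add: power2_eq_square)
      finally show ?thesis .
    qed
    then show ?thesis using a0 by blast
  qed
  then show "0 \<le> alpha m U" "alpha m U \<le> 1"
    "\<And>s. 0 < s \<Longrightarrow> s \<le> 2 * real_of_int U \<Longrightarrow> s powr alpha m U \<le> 101/100" by auto
qed


theorem lemma4p9:
  fixes E :: "'e set" and lo up :: "'e \<Rightarrow> int" and U :: int
    and f fbar :: "'e \<Rightarrow> real" and \<epsilon> :: real
  assumes "finite E"
    and "\<forall>e\<in>E. \<bar>lo e\<bar> \<le> U \<and> \<bar>up e\<bar> \<le> U"
    and "\<forall>e\<in>E. real_of_int (lo e) < f e \<and> f e < real_of_int (up e)"
    and "linf E (\<lambda>e. len (alpha (card E) U) lo up f e * (f e - fbar e)) \<le> \<epsilon>"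
    and "\<epsilon> \<le> 1/100"
  shows "approx E (1 + 3 * \<epsilon>) (len (alpha (card E) U) lo up f) (len (alpha (card E) U) lo up fbar)"
  unfolding approx_def
proof
  fix e assume eE: "e \<in> E"
  define a where "a = alpha (card E) U"
  define s where "s = real_of_int (up e) - f e"
  define t where "t = f e - real_of_int (lo e)"
  define d where "d = f e - fbar e"
  have ne: "E \<noteq> {}" using eE by auto
  have m1: "1 \<le> card E" using assms(1) ne by (simp add: Suc_le_eq card_gt_0_iff)
  have b: "\<bar>lo e\<bar> \<le> U" "\<bar>up e\<bar> \<le> U" using assms(2) eE by auto
  have fb: "real_of_int (lo e) < f e" "f e < real_of_int (up e)" using assms(3) eE by auto
  have lu: "lo e < up e" using fb by linarith
  have U1: "1 \<le> U" using b lu by linarith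
  have U2: "real_of_int (up e) - real_of_int (lo e) \<le> 2 * real_of_int U"
  proof -
    have "up e - lo e \<le> 2 * U" using b by linarith
    then show ?thesis by (metis of_int_diff of_int_le_iff of_int_mult of_int_numeral)
  qed
  have s0: "0 < s" and t0: "0 < t" using fb by (auto simp: s_def t_def)
  have s2: "s \<le> 2 * real_of_int U" and t2: "t \<le> 2 * real_of_int U"
    using fb U2 by (auto simp: s_def t_def)
  note ap = alpha_props[OF m1 U1, folded a_def]
  have lenf: "len a lo up f e = s powr (-1-a) + t powr (-1-a)"
    by (simp add: len_def s_def t_def)
  have lpos: "0 \<le> len a lo up f e" unfolding lenf by simp
  have lenb: "len a lo up fbar e = (s + d) powr (-1-a) + (t + - d) powr (-1-a)"
    by (simp add: len_def s_def t_def d_def)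
  have "\<bar>len a lo up f e * d\<bar> \<le> linf E (\<lambda>e. len a lo up f e * (f e - fbar e))"
    unfolding linf_def d_def using ne assms(1) eE by (auto intro!: Max_ge)
  then have ld: "\<bar>len a lo up f e * d\<bar> \<le> \<epsilon>" using assms(4) by (simp add: a_def)
  have e0: "0 \<le> \<epsilon>" using ld by linarith
  have "\<bar>d\<bar> * s powr (-1-a) \<le> \<bar>d\<bar> * len a lo up f e"
    unfolding lenf by (intro mult_left_mono) auto
  also have "\<dots> \<le> \<epsilon>" using ld lpos by (simp add: abs_mult mult.commute)
  finally have ds: "\<bar>d\<bar> * s powr (-1-a) \<le> \<epsilon>" .
  have "\<bar>- d\<bar> * t powr (-1-a) \<le> \<bar>d\<bar> * len a lo up f e"
    unfolding lenf abs_minus_cancel by (intro mult_left_mono) auto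
  also have "\<dots> \<le> \<epsilon>" using ld lpos by (simp add: abs_mult mult.commute)
  finally have dt: "\<bar>- d\<bar> * t powr (-1-a) \<le> \<epsilon>" .
  note S = term_bound[OF s0 ap(1) ap(2) ap(3)[OF s0 s2] ds e0 assms(5)]
  note T = term_bound[OF t0 ap(1) ap(2) ap(3)[OF t0 t2] dt e0 assms(5)]
  have c0: "0 < 1 + 3 * \<epsilon>" using e0 by simp
  have up1: "len a lo up fbar e \<le> (1 + 3*\<epsilon>) * len a lo up f e"
    unfolding lenb lenf using S(1) T(1) by (simp add: distrib_left)
  have up2: "len a lo up f e \<le> (1 + 3*\<epsilon>) * len a lo up fbar e"
    unfolding lenb lenf using S(2) T(2) by (simp add: distrib_left)
  show "len (alpha (card E) U) lo up fbar e / (1 + 3 * \<epsilon>) \<le> len (alpha (card E) U) lo up f e \<and>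
         len (alpha (card E) U) lo up f e \<le> (1 + 3 * \<epsilon>) * len (alpha (card E) U) lo up fbar e"
    using up1 up2 c0 unfolding a_def[symmetric] by (simp add: divide_le_eq mult.commute)
qed

end
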